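(* For every positive integer $k$ and every cell $c$ of the Aztec diamond $\operatorname{AD}(3k-2)$, the set $\operatorname{AD}(3k-2)\setminus\{c\}$ can be partitioned into L-trominoes (i.e. $\operatorname{AD}(3k-2)$ with one defect has a cover).
   Context: A cell is a unit square $[i,i+1]\times[j,j+1]$ with $i,j\in\mathbb{Z}$. An L-tromino is a set of three cells equal to a $2\times 2$ block of cells with one cell removed. The Aztec diamond $\operatorname{AD}(n)$ is the union of the cells $[a,a+1]\times[b,b+1]$, $a,b\in\mathbb{Z}$, lying completely inside $\{(x,y): |x|+|y|\le n+1\}$. *)

theory Defs
  imports Main
begin

(* A cell [a,a+1] x [b,b+1] is represented by its lower-left corner (a,b). *)
type_synonym cell = "int \<times> int"

definition block2 :: "int \<Rightarrow> int \<Rightarrow> cell set" where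
  "block2 i j = {(i,j), (i+1,j), (i,j+1), (i+1,j+1)}"

definition is_L_tromino :: "cell set \<Rightarrow> bool" where
  "is_L_tromino T \<longleftrightarrow> (\<exists>i j c. c \<in> block2 i j \<and> T = block2 i j - {c})"

(* The cell with corner (a,b) lies completely inside {|x|+|y| <= n+1}
   iff all four of its corners do (the region is convex). *)
definition aztec_diamond :: "nat \<Rightarrow> cell set" where
  "aztec_diamond n = {(a,b). \<forall>x\<in>{a, a+1}. \<forall>y\<in>{b, b+1}.
                          \<bar>x\<bar> + \<bar>y\<bar> \<le> int n + 1}"

definition tromino_partitionable :: "cell set \<Rightarrow> bool" where
  "tromino_partitionable S \<longleftrightarrow>
     (\<exists>P. (\<forall>T\<in>P. is_L_tromino T) \<and>
          (\<forall>T1\<in>P. \<forall>T2\<in>P. T1 \<noteq> T2 \<longrightarrow> T1 \<inter> T2 = {}) \<and>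
          \<Union>P = S)"

end

theory Submission
  imports Defs
begin

abbreviation part :: "cell set \<Rightarrow> bool" where "part \<equiv> tromino_partitionable"

lemma part_empty: "part {}"
  unfolding tromino_partitionable_def by (rule exI[of _ "{}"]) auto

lemma part_tromino: "is_L_tromino T \<Longrightarrow> part T"
  unfolding tromino_partitionable_def by (rule exI[of _ "{T}"]) auto

lemma part_union:
  assumes "part A" "part B" "A \<inter> B = {}"
  shows "part (A \<union> B)"
proof -
  obtain P where P: "\<forall>T\<in>P. is_L_tromino T" "\<forall>T1\<in>P. \<forall>T2\<in>P. T1 \<noteq> T2 \<longrightarrow> T1 \<inter> T2 = {}" "\<Union>P = A"
    using assms(1) unfolding tromino_partitionable_def by blast
  obtain Q where Q: "\<forall>T\<in>Q. is_L_tromino T" "\<forall>T1\<in>Q. \<forall>T2\<in>Q. T1 \<noteq> T2 \<longrightarrow> T1 \<inter> T2 = {}" "\<Union>Q = B"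
    using assms(2) unfolding tromino_partitionable_def by blast
  show ?thesis unfolding tromino_partitionable_def
  proof (rule exI[of _ "P \<union> Q"], intro conjI)
    show "\<forall>T\<in>P \<union> Q. is_L_tromino T" using P Q by blast
    show "\<forall>T1\<in>P \<union> Q. \<forall>T2\<in>P \<union> Q. T1 \<noteq> T2 \<longrightarrow> T1 \<inter> T2 = {}"
    proof (intro ballI impI)
      fix T1 T2 assume h: "T1 \<in> P \<union> Q" "T2 \<in> P \<union> Q" "T1 \<noteq> T2"
      show "T1 \<inter> T2 = {}"
      proof (cases "T1 \<in> P")
        case True
        show ?thesis
        proof (cases "T2 \<in> P")
          case True
          then show ?thesis using \<open>T1 \<in> P\<close> h(3) P(2) by blast
        next
          case False
          then have "T2 \<in> Q" using h(2) by blast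
          then have "T2 \<subseteq> B" using Q(3) by blast
          moreover have "T1 \<subseteq> A" using True P(3) by blast
          ultimately show ?thesis using assms(3) by blast
        qed
      next
        case False
        then have q1: "T1 \<in> Q" using h(1) by blast
        show ?thesis
        proof (cases "T2 \<in> Q")
          case True
          then show ?thesis using q1 h(3) Q(2) by blast
        next
          case False
          then have "T2 \<in> P" using h(2) by blast
          then have "T2 \<subseteq> A" using P(3) by blast
          moreover have "T1 \<subseteq> B" using q1 Q(3) by blast
          ultimately show ?thesis using assms(3) by blast
        qed
      qed
    qed
    show "\<Union>(P \<union> Q) = A \<union> B" using P(3) Q(3) by blast
  qed
qed

lemma part_image:
  assumes "inj g" "\<And>T. is_L_tromino T \<Longrightarrow> is_L_tromino (g ` T)" "part S"
  shows "part (g ` S)"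
proof -
  obtain P where P: "\<forall>T\<in>P. is_L_tromino T" "\<forall>T1\<in>P. \<forall>T2\<in>P. T1 \<noteq> T2 \<longrightarrow> T1 \<inter> T2 = {}" "\<Union>P = S"
    using assms(3) unfolding tromino_partitionable_def by blast
  show ?thesis unfolding tromino_partitionable_def
  proof (rule exI[of _ "(\<lambda>T. g ` T) ` P"], intro conjI)
    show "\<forall>T\<in>(\<lambda>T. g ` T) ` P. is_L_tromino T" using P(1) assms(2) by auto
    show "\<forall>T1\<in>(\<lambda>T. g ` T) ` P. \<forall>T2\<in>(\<lambda>T. g ` T) ` P. T1 \<noteq> T2 \<longrightarrow> T1 \<inter> T2 = {}"
    proof (intro ballI impI)
      fix T1 T2 assume h: "T1 \<in> (\<lambda>T. g ` T) ` P" "T2 \<in> (\<lambda>T. g ` T) ` P" "T1 \<noteq> T2"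
      then obtain U1 U2 where u: "U1 \<in> P" "U2 \<in> P" "T1 = g ` U1" "T2 = g ` U2" by blast
      then have "U1 \<noteq> U2" using h(3) by auto
      then have "U1 \<inter> U2 = {}" using P(2) u(1,2) by auto
      then show "T1 \<inter> T2 = {}" using u assms(1) by (auto simp: inj_eq)
    qed
    show "\<Union>((\<lambda>T. g ` T) ` P) = g ` S" using P(3) by auto
  qed
qed

lemma L_image_block:
  assumes "inj g" "\<And>i j. \<exists>i' j'. g ` block2 i j = block2 i' j'"
    "is_L_tromino T"
  shows "is_L_tromino (g ` T)"
proof -
  obtain i j c where h: "c \<in> block2 i j" "T = block2 i j - {c}"
    using assms(3) unfolding is_L_tromino_def by blast
  obtain i' j' where b: "g ` block2 i j = block2 i' j'" using assms(2) by blast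
  have "g ` T = block2 i' j' - {g c}"
    using h b assms(1) by (simp add: image_set_diff)
  moreover have "g c \<in> block2 i' j'" using h b by blast
  ultimately show ?thesis unfolding is_L_tromino_def by blast
qed

definition tr :: "int \<Rightarrow> int \<Rightarrow> cell \<Rightarrow> cell" where "tr dx dy = (\<lambda>(a,b). (a+dx, b+dy))"
definition sa :: "cell \<Rightarrow> cell" where "sa = (\<lambda>(a,b). (-1-a, b))"
definition sb :: "cell \<Rightarrow> cell" where "sb = (\<lambda>(a,b). (a, -1-b))"
definition sw :: "cell \<Rightarrow> cell" where "sw = (\<lambda>(a,b). (b, a))"

lemma tr_app[simp]: "tr dx dy (a,b) = (a+dx, b+dy)" by (simp add: tr_def)
lemma sa_app[simp]: "sa (a,b) = (-1-a, b)" by (simp add: sa_def)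
lemma sb_app[simp]: "sb (a,b) = (a, -1-b)" by (simp add: sb_def)
lemma sw_app[simp]: "sw (a,b) = (b, a)" by (simp add: sw_def)

lemma inj_tr: "inj (tr dx dy)" by (auto simp: inj_def tr_def)
lemma inj_sa: "inj sa" by (auto simp: inj_def sa_def)
lemma inj_sb: "inj sb" by (auto simp: inj_def sb_def)
lemma inj_sw: "inj sw" by (auto simp: inj_def sw_def)

lemma L_tr: "is_L_tromino T \<Longrightarrow> is_L_tromino (tr dx dy ` T)"
proof (rule L_image_block[OF inj_tr])
  fix i j show "\<exists>i' j'. tr dx dy ` block2 i j = block2 i' j'"
    by (rule exI[of _ "i+dx"], rule exI[of _ "j+dy"]) (simp add: block2_def algebra_simps)
qed

lemma L_sa: "is_L_tromino T \<Longrightarrow> is_L_tromino (sa ` T)"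
proof (rule L_image_block[OF inj_sa])
  fix i j show "\<exists>i' j'. sa ` block2 i j = block2 i' j'"
    by (rule exI[of _ "-i-2"], rule exI[of _ "j"]) (simp add: block2_def insert_commute algebra_simps)
qed

lemma L_sb: "is_L_tromino T \<Longrightarrow> is_L_tromino (sb ` T)"
proof (rule L_image_block[OF inj_sb])
  fix i j show "\<exists>i' j'. sb ` block2 i j = block2 i' j'"
    by (rule exI[of _ "i"], rule exI[of _ "-j-2"]) (simp add: block2_def insert_commute algebra_simps)
qed

lemma L_sw: "is_L_tromino T \<Longrightarrow> is_L_tromino (sw ` T)"
proof (rule L_image_block[OF inj_sw])
  fix i j show "\<exists>i' j'. sw ` block2 i j = block2 i' j'"
    by (rule exI[of _ "j"], rule exI[of _ "i"]) (simp add: block2_def insert_commute)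
qed

definition fa :: "int \<Rightarrow> int" where "fa x = (if 0 \<le> x then x else -x-1)"

lemma AD_iff: "(a,b) \<in> aztec_diamond n \<longleftrightarrow> fa a + fa b \<le> int n - 1"
  by (auto simp: aztec_diamond_def fa_def abs_if split: if_splits)

lemma fa_sa[simp]: "fa (-1-a) = fa a" by (simp add: fa_def)

lemma inv_image_iff: "(\<And>x. g (g x) = x) \<Longrightarrow> (x \<in> g ` S) = (g x \<in> S)"
  by (metis image_iff)

lemma sa_sa[simp]: "sa (sa x) = x" by (cases x) simp
lemma sb_sb[simp]: "sb (sb x) = x" by (cases x) simp
lemma sw_sw[simp]: "sw (sw x) = x" by (cases x) simp

lemma sa_AD: "x \<in> aztec_diamond n \<Longrightarrow> sa x \<in> aztec_diamond n"
  by (cases x) (simp add: AD_iff)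
lemma sb_AD: "x \<in> aztec_diamond n \<Longrightarrow> sb x \<in> aztec_diamond n"
  by (cases x) (simp add: AD_iff)
lemma sw_AD: "x \<in> aztec_diamond n \<Longrightarrow> sw x \<in> aztec_diamond n"
  by (cases x) (simp add: AD_iff)

lemma sym_transfer:
  assumes inv: "\<And>x. g (g x) = x" and inj: "inj g"
    and L: "\<And>T. is_L_tromino T \<Longrightarrow> is_L_tromino (g ` T)"
    and AD: "\<And>x. x \<in> aztec_diamond n \<Longrightarrow> g x \<in> aztec_diamond n"
    and p: "part (aztec_diamond n - {g c})"
  shows "part (aztec_diamond n - {c})"
proof -
  have "g ` (aztec_diamond n - {g c}) = aztec_diamond n - {c}"
  proof (rule set_eqI)
    fix x show "(x \<in> g ` (aztec_diamond n - {g c})) = (x \<in> aztec_diamond n - {c})"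
      using inv_image_iff[of g x, OF inv] AD inv by (metis Diff_iff singleton_iff)
  qed
  then show ?thesis using part_image[OF inj L p] by simp
qed

lemma sym_reduce:
  assumes H: "\<And>a b. (a,b) \<in> aztec_diamond n \<Longrightarrow> 0 \<le> b \<Longrightarrow> b \<le> a \<Longrightarrow> part (aztec_diamond n - {(a,b)})"
    and c: "c \<in> aztec_diamond n"
  shows "part (aztec_diamond n - {c})"
proof -
  have H1: "part (aztec_diamond n - {(a,b)})" if "(a,b) \<in> aztec_diamond n" "0 \<le> a" "0 \<le> b" for a b
  proof (cases "b \<le> a")
    case True then show ?thesis using H that by blast
  next
    case False
    have "part (aztec_diamond n - {sw (a,b)})" using H[of b a] that False sw_AD[OF that(1)] by simp
    then show ?thesis using sym_transfer[of sw n "(a,b)"] inj_sw L_sw sw_AD by simp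
  qed
  have H2: "part (aztec_diamond n - {(a,b)})" if "(a,b) \<in> aztec_diamond n" "0 \<le> b" for a b
  proof (cases "0 \<le> a")
    case True then show ?thesis using H1 that by blast
  next
    case False
    have "part (aztec_diamond n - {sa (a,b)})" using H1[of "-1-a" b] that False sa_AD[OF that(1)] by simp
    then show ?thesis using sym_transfer[of sa n "(a,b)"] inj_sa L_sa sa_AD by simp
  qed
  obtain a b where ab: "c = (a,b)" by (cases c)
  show ?thesis
  proof (cases "0 \<le> b")
    case True then show ?thesis using H2 c ab by blast
  next
    case False
    have "part (aztec_diamond n - {sb (a,b)})" using H2[of a "-1-b"] c ab False sb_AD[of c n] by simp
    then show ?thesis unfolding ab using sym_transfer[of sb n "(a,b)"] inj_sb L_sb sb_AD by simp
  qed
qed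

definition tri :: "nat \<Rightarrow> int \<Rightarrow> int \<Rightarrow> cell list" where
  "tri k i j = (if k = 1 then [(i,j),(i+1,j),(i,j+1)] else if k = 2 then [(i,j),(i+1,j),(i+1,j+1)]
     else if k = 3 then [(i,j),(i,j+1),(i+1,j+1)] else [(i+1,j),(i,j+1),(i+1,j+1)])"

lemma L_tri: "is_L_tromino (set (tri k i j))"
proof -
  have "set (tri k i j) = block2 i j - {if k = 1 then (i+1,j+1) else if k = 2 then (i,j+1) else if k = 3 then (i+1,j) else (i,j)}
        \<and> (if k = 1 then (i+1,j+1) else if k = 2 then (i,j+1) else if k = 3 then (i+1,j) else (i,j)) \<in> block2 i j"
    by (auto simp: tri_def block2_def)
  then show ?thesis unfolding is_L_tromino_def by blast
qed

lemma part_list: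
  assumes "\<forall>t\<in>set L. is_L_tromino (set t)" "distinct (concat L)"
  shows "part (set (concat L))"
  unfolding tromino_partitionable_def
proof (rule exI[of _ "set ` set L"], intro conjI)
  show "\<forall>T\<in>set ` set L. is_L_tromino T" using assms(1) by auto
  show "\<forall>T1\<in>set ` set L. \<forall>T2\<in>set ` set L. T1 \<noteq> T2 \<longrightarrow> T1 \<inter> T2 = {}"
    using assms(2) unfolding distinct_concat_iff by blast
  show "\<Union> (set ` set L) = set (concat L)" by simp
qed

lemma part_tris:
  assumes "distinct (concat (map (\<lambda>(k,i,j). tri k i j) L))"
  shows "part (set (concat (map (\<lambda>(k,i,j). tri k i j) L)))"
  by (rule part_list[OF _ assms]) (auto simp: L_tri)

lemma subset_pairI: "(\<And>a b. (a,b) \<in> A \<Longrightarrow> (a,b) \<in> B) \<Longrightarrow> A \<subseteq> B" by auto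

definition PARs :: "int \<Rightarrow> int \<Rightarrow> cell set" where
  "PARs x0 y0 = {(a,b). y0 \<le> b \<and> b \<le> y0+1 \<and> x0 + (b-y0) \<le> a \<and> a \<le> x0 + (b-y0) + 5}"

lemma part_PARs: "part (PARs x0 y0)"
proof -
  let ?L = "[(2::nat,x0,y0),(3,x0+5,y0),(4,x0+3,y0),(1,x0+2,y0)]"
  have d: "distinct (concat (map (\<lambda>(k,i,j). tri k i j) ?L))" by (simp add: tri_def)
  have e: "set (concat (map (\<lambda>(k,i,j). tri k i j) ?L)) = PARs x0 y0"
  proof (rule equalityI)
    show "set (concat (map (\<lambda>(k,i,j). tri k i j) ?L)) \<subseteq> PARs x0 y0" by (auto simp: tri_def PARs_def)
    show "PARs x0 y0 \<subseteq> set (concat (map (\<lambda>(k,i,j). tri k i j) ?L))"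
      by (rule subset_pairI, simp add: tri_def PARs_def, presburger)
  qed
  show ?thesis using part_tris[OF d] e by simp
qed

definition UB :: "int \<Rightarrow> nat \<Rightarrow> cell set" where
  "UB x0 m = {(a,b). 0 \<le> b \<and> b < 2 * int m \<and> x0 + b \<le> a \<and> a \<le> x0 + b + 5}"

lemma part_UB: "part (UB x0 m)"
proof (induction m)
  case 0
  have "UB x0 0 = {}" by (auto simp: UB_def)
  then show ?case using part_empty by simp
next
  case (Suc m)
  have e: "UB x0 (Suc m) = UB x0 m \<union> PARs (x0 + 2 * int m) (2 * int m)"
    by (auto simp: UB_def PARs_def)
  have d: "UB x0 m \<inter> PARs (x0 + 2 * int m) (2 * int m) = {}"
    by (auto simp: UB_def PARs_def)
  show ?case unfolding e by (rule part_union[OF Suc part_PARs d])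
qed

definition TT :: "int \<Rightarrow> cell set" where
  "TT n = {(a,b). (b = n+1 \<and> -2 \<le> a \<and> a \<le> 1) \<or> (b = n+2 \<and> -1 \<le> a \<and> a \<le> 0)}"

definition TT12 :: "int \<Rightarrow> cell set" where
  "TT12 n = {(a,b). (b = n \<and> -3 \<le> a \<and> a \<le> 2) \<or> (b = n+1 \<and> -2 \<le> a \<and> a \<le> 1) \<or> (b = n+2 \<and> -1 \<le> a \<and> a \<le> 0)}"

lemma part_TT: "part (TT n)"
proof -
  let ?L = "[(2::nat,-2,n+1),(1,0,n+1)]"
  have d: "distinct (concat (map (\<lambda>(k,i,j). tri k i j) ?L))" by (simp add: tri_def)
  have e: "set (concat (map (\<lambda>(k,i,j). tri k i j) ?L)) = TT n"
  proof (rule equalityI)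
    show "set (concat (map (\<lambda>(k,i,j). tri k i j) ?L)) \<subseteq> TT n" by (auto simp: tri_def TT_def)
    show "TT n \<subseteq> set (concat (map (\<lambda>(k,i,j). tri k i j) ?L))"
      by (rule subset_pairI, simp add: tri_def TT_def, presburger)
  qed
  show ?thesis using part_tris[OF d] e by simp
qed

lemma part_TT12: "part (TT12 n)"
proof -
  let ?L = "[(1::nat,1,n),(2,-3,n),(1,-1,n),(4,-1,n+1)]"
  have d: "distinct (concat (map (\<lambda>(k,i,j). tri k i j) ?L))" by (simp add: tri_def)
  have e: "set (concat (map (\<lambda>(k,i,j). tri k i j) ?L)) = TT12 n"
  proof (rule equalityI)
    show "set (concat (map (\<lambda>(k,i,j). tri k i j) ?L)) \<subseteq> TT12 n" by (auto simp: tri_def TT12_def)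
    show "TT12 n \<subseteq> set (concat (map (\<lambda>(k,i,j). tri k i j) ?L))"
      by (rule subset_pairI, simp add: tri_def TT12_def, presburger)
  qed
  show ?thesis using part_tris[OF d] e by simp
qed

lemma AD4_explicit:
  assumes d: "distinct (concat (map (\<lambda>(k,i,j). tri k i j) L))"
    and e1: "set (concat (map (\<lambda>(k,i,j). tri k i j) L)) \<subseteq> aztec_diamond 4 - {c}"
    and e2: "aztec_diamond 4 - {c} \<subseteq> set (concat (map (\<lambda>(k,i,j). tri k i j) L))"
  shows "part (aztec_diamond 4 - {c})"
  using part_tris[OF d] e1 e2 by (metis subset_antisym)

lemma AD4_c1: "part (aztec_diamond 4 - {(0,0)})"
proof (rule AD4_explicit[of "[(2::nat,(2)::int,(-1)::int), (1::nat,(1)::int,(-2)::int), (3::nat,(0)::int,(-4)::int), (4::nat,(-2)::int,(-4)::int), (2::nat,(1)::int,(0)::int), (4::nat,(-1)::int,(-2)::int), (1::nat,(-2)::int,(-2)::int), (4::nat,(-4)::int,(-2)::int), (2::nat,(-4)::int,(0)::int), (2::nat,(0)::int,(1)::int), (4::nat,(-1)::int,(2)::int), (2::nat,(-2)::int,(0)::int), (3::nat,(-2)::int,(1)::int)]"])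
  show "distinct (concat (map (\<lambda>(k,i,j). tri k i j) [(2::nat,(2)::int,(-1)::int), (1::nat,(1)::int,(-2)::int), (3::nat,(0)::int,(-4)::int), (4::nat,(-2)::int,(-4)::int), (2::nat,(1)::int,(0)::int), (4::nat,(-1)::int,(-2)::int), (1::nat,(-2)::int,(-2)::int), (4::nat,(-4)::int,(-2)::int), (2::nat,(-4)::int,(0)::int), (2::nat,(0)::int,(1)::int), (4::nat,(-1)::int,(2)::int), (2::nat,(-2)::int,(0)::int), (3::nat,(-2)::int,(1)::int)]))" by (simp add: tri_def)
  show "set (concat (map (\<lambda>(k,i,j). tri k i j) [(2::nat,(2)::int,(-1)::int), (1::nat,(1)::int,(-2)::int), (3::nat,(0)::int,(-4)::int), (4::nat,(-2)::int,(-4)::int), (2::nat,(1)::int,(0)::int), (4::nat,(-1)::int,(-2)::int), (1::nat,(-2)::int,(-2)::int), (4::nat,(-4)::int,(-2)::int), (2::nat,(-4)::int,(0)::int), (2::nat,(0)::int,(1)::int), (4::nat,(-1)::int,(2)::int), (2::nat,(-2)::int,(0)::int), (3::nat,(-2)::int,(1)::int)])) \<subseteq> aztec_diamond 4 - {(0,0)}"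
    by (auto simp: tri_def AD_iff fa_def)
  show "aztec_diamond 4 - {(0,0)} \<subseteq> set (concat (map (\<lambda>(k,i,j). tri k i j) [(2::nat,(2)::int,(-1)::int), (1::nat,(1)::int,(-2)::int), (3::nat,(0)::int,(-4)::int), (4::nat,(-2)::int,(-4)::int), (2::nat,(1)::int,(0)::int), (4::nat,(-1)::int,(-2)::int), (1::nat,(-2)::int,(-2)::int), (4::nat,(-4)::int,(-2)::int), (2::nat,(-4)::int,(0)::int), (2::nat,(0)::int,(1)::int), (4::nat,(-1)::int,(2)::int), (2::nat,(-2)::int,(0)::int), (3::nat,(-2)::int,(1)::int)]))"
    by (rule subset_pairI, simp add: tri_def AD_iff fa_def split: if_splits, presburger+)
qed

lemma AD4_c2: "part (aztec_diamond 4 - {(1,0)})"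
proof (rule AD4_explicit[of "[(4::nat,(1)::int,(0)::int), (2::nat,(2)::int,(-1)::int), (1::nat,(1)::int,(-2)::int), (3::nat,(0)::int,(-4)::int), (4::nat,(-2)::int,(-4)::int), (1::nat,(0)::int,(2)::int), (2::nat,(-2)::int,(2)::int), (4::nat,(-1)::int,(0)::int), (4::nat,(-1)::int,(-2)::int), (1::nat,(-2)::int,(-2)::int), (4::nat,(-4)::int,(-2)::int), (2::nat,(-4)::int,(0)::int), (1::nat,(-2)::int,(0)::int)]"])
  show "distinct (concat (map (\<lambda>(k,i,j). tri k i j) [(4::nat,(1)::int,(0)::int), (2::nat,(2)::int,(-1)::int), (1::nat,(1)::int,(-2)::int), (3::nat,(0)::int,(-4)::int), (4::nat,(-2)::int,(-4)::int), (1::nat,(0)::int,(2)::int), (2::nat,(-2)::int,(2)::int), (4::nat,(-1)::int,(0)::int), (4::nat,(-1)::int,(-2)::int), (1::nat,(-2)::int,(-2)::int), (4::nat,(-4)::int,(-2)::int), (2::nat,(-4)::int,(0)::int), (1::nat,(-2)::int,(0)::int)]))" by (simp add: tri_def)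
  show "set (concat (map (\<lambda>(k,i,j). tri k i j) [(4::nat,(1)::int,(0)::int), (2::nat,(2)::int,(-1)::int), (1::nat,(1)::int,(-2)::int), (3::nat,(0)::int,(-4)::int), (4::nat,(-2)::int,(-4)::int), (1::nat,(0)::int,(2)::int), (2::nat,(-2)::int,(2)::int), (4::nat,(-1)::int,(0)::int), (4::nat,(-1)::int,(-2)::int), (1::nat,(-2)::int,(-2)::int), (4::nat,(-4)::int,(-2)::int), (2::nat,(-4)::int,(0)::int), (1::nat,(-2)::int,(0)::int)])) \<subseteq> aztec_diamond 4 - {(1,0)}"
    by (auto simp: tri_def AD_iff fa_def)
  show "aztec_diamond 4 - {(1,0)} \<subseteq> set (concat (map (\<lambda>(k,i,j). tri k i j) [(4::nat,(1)::int,(0)::int), (2::nat,(2)::int,(-1)::int), (1::nat,(1)::int,(-2)::int), (3::nat,(0)::int,(-4)::int), (4::nat,(-2)::int,(-4)::int), (1::nat,(0)::int,(2)::int), (2::nat,(-2)::int,(2)::int), (4::nat,(-1)::int,(0)::int), (4::nat,(-1)::int,(-2)::int), (1::nat,(-2)::int,(-2)::int), (4::nat,(-4)::int,(-2)::int), (2::nat,(-4)::int,(0)::int), (1::nat,(-2)::int,(0)::int)]))"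
    by (rule subset_pairI, simp add: tri_def AD_iff fa_def split: if_splits, presburger+)
qed

lemma AD4_c3: "part (aztec_diamond 4 - {(1,1)})"
proof (rule AD4_explicit[of "[(1::nat,(0)::int,(2)::int), (2::nat,(-2)::int,(2)::int), (1::nat,(2)::int,(0)::int), (3::nat,(2)::int,(-2)::int), (4::nat,(-1)::int,(0)::int), (2::nat,(0)::int,(-1)::int), (4::nat,(0)::int,(-3)::int), (2::nat,(-1)::int,(-4)::int), (2::nat,(-2)::int,(-3)::int), (3::nat,(-4)::int,(-1)::int), (4::nat,(-3)::int,(0)::int), (2::nat,(-2)::int,(-1)::int), (1::nat,(-3)::int,(-2)::int)]"])
  show "distinct (concat (map (\<lambda>(k,i,j). tri k i j) [(1::nat,(0)::int,(2)::int), (2::nat,(-2)::int,(2)::int), (1::nat,(2)::int,(0)::int), (3::nat,(2)::int,(-2)::int), (4::nat,(-1)::int,(0)::int), (2::nat,(0)::int,(-1)::int), (4::nat,(0)::int,(-3)::int), (2::nat,(-1)::int,(-4)::int), (2::nat,(-2)::int,(-3)::int), (3::nat,(-4)::int,(-1)::int), (4::nat,(-3)::int,(0)::int), (2::nat,(-2)::int,(-1)::int), (1::nat,(-3)::int,(-2)::int)]))" by (simp add: tri_def)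
  show "set (concat (map (\<lambda>(k,i,j). tri k i j) [(1::nat,(0)::int,(2)::int), (2::nat,(-2)::int,(2)::int), (1::nat,(2)::int,(0)::int), (3::nat,(2)::int,(-2)::int), (4::nat,(-1)::int,(0)::int), (2::nat,(0)::int,(-1)::int), (4::nat,(0)::int,(-3)::int), (2::nat,(-1)::int,(-4)::int), (2::nat,(-2)::int,(-3)::int), (3::nat,(-4)::int,(-1)::int), (4::nat,(-3)::int,(0)::int), (2::nat,(-2)::int,(-1)::int), (1::nat,(-3)::int,(-2)::int)])) \<subseteq> aztec_diamond 4 - {(1,1)}"
    by (auto simp: tri_def AD_iff fa_def)
  show "aztec_diamond 4 - {(1,1)} \<subseteq> set (concat (map (\<lambda>(k,i,j). tri k i j) [(1::nat,(0)::int,(2)::int), (2::nat,(-2)::int,(2)::int), (1::nat,(2)::int,(0)::int), (3::nat,(2)::int,(-2)::int), (4::nat,(-1)::int,(0)::int), (2::nat,(0)::int,(-1)::int), (4::nat,(0)::int,(-3)::int), (2::nat,(-1)::int,(-4)::int), (2::nat,(-2)::int,(-3)::int), (3::nat,(-4)::int,(-1)::int), (4::nat,(-3)::int,(0)::int), (2::nat,(-2)::int,(-1)::int), (1::nat,(-3)::int,(-2)::int)]))"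
    by (rule subset_pairI, simp add: tri_def AD_iff fa_def split: if_splits, presburger+)
qed

lemma AD4_c4: "part (aztec_diamond 4 - {(2,1)})"
proof (rule AD4_explicit[of "[(2::nat,(2)::int,(-1)::int), (1::nat,(1)::int,(-2)::int), (1::nat,(1)::int,(0)::int), (3::nat,(0)::int,(-4)::int), (4::nat,(-2)::int,(-4)::int), (1::nat,(0)::int,(2)::int), (2::nat,(-2)::int,(2)::int), (4::nat,(-1)::int,(0)::int), (2::nat,(-1)::int,(-2)::int), (3::nat,(-4)::int,(-1)::int), (4::nat,(-3)::int,(0)::int), (2::nat,(-2)::int,(-1)::int), (1::nat,(-3)::int,(-2)::int)]"])
  show "distinct (concat (map (\<lambda>(k,i,j). tri k i j) [(2::nat,(2)::int,(-1)::int), (1::nat,(1)::int,(-2)::int), (1::nat,(1)::int,(0)::int), (3::nat,(0)::int,(-4)::int), (4::nat,(-2)::int,(-4)::int), (1::nat,(0)::int,(2)::int), (2::nat,(-2)::int,(2)::int), (4::nat,(-1)::int,(0)::int), (2::nat,(-1)::int,(-2)::int), (3::nat,(-4)::int,(-1)::int), (4::nat,(-3)::int,(0)::int), (2::nat,(-2)::int,(-1)::int), (1::nat,(-3)::int,(-2)::int)]))" by (simp add: tri_def)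
  show "set (concat (map (\<lambda>(k,i,j). tri k i j) [(2::nat,(2)::int,(-1)::int), (1::nat,(1)::int,(-2)::int), (1::nat,(1)::int,(0)::int), (3::nat,(0)::int,(-4)::int), (4::nat,(-2)::int,(-4)::int), (1::nat,(0)::int,(2)::int), (2::nat,(-2)::int,(2)::int), (4::nat,(-1)::int,(0)::int), (2::nat,(-1)::int,(-2)::int), (3::nat,(-4)::int,(-1)::int), (4::nat,(-3)::int,(0)::int), (2::nat,(-2)::int,(-1)::int), (1::nat,(-3)::int,(-2)::int)])) \<subseteq> aztec_diamond 4 - {(2,1)}"
    by (auto simp: tri_def AD_iff fa_def)
  show "aztec_diamond 4 - {(2,1)} \<subseteq> set (concat (map (\<lambda>(k,i,j). tri k i j) [(2::nat,(2)::int,(-1)::int), (1::nat,(1)::int,(-2)::int), (1::nat,(1)::int,(0)::int), (3::nat,(0)::int,(-4)::int), (4::nat,(-2)::int,(-4)::int), (1::nat,(0)::int,(2)::int), (2::nat,(-2)::int,(2)::int), (4::nat,(-1)::int,(0)::int), (2::nat,(-1)::int,(-2)::int), (3::nat,(-4)::int,(-1)::int), (4::nat,(-3)::int,(0)::int), (2::nat,(-2)::int,(-1)::int), (1::nat,(-3)::int,(-2)::int)]))"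
    by (rule subset_pairI, simp add: tri_def AD_iff fa_def split: if_splits, presburger+)
qed

lemma tr_mem: "((a,b) \<in> tr dx dy ` S) = ((a-dx, b-dy) \<in> S)"
proof
  assume "(a,b) \<in> tr dx dy ` S"
  then obtain p q where "(p,q) \<in> S" "(a,b) = (p+dx,q+dy)" by (auto simp: tr_def)
  then show "(a-dx, b-dy) \<in> S" by simp
next
  assume "(a-dx, b-dy) \<in> S"
  then have "tr dx dy (a-dx, b-dy) \<in> tr dx dy ` S" by blast
  then show "(a,b) \<in> tr dx dy ` S" by simp
qed

definition Cn :: "nat \<Rightarrow> cell set" where
  "Cn n = aztec_diamond (n+3) - tr 3 0 ` aztec_diamond n"

lemma Cn_mem: "((a,b) \<in> Cn n) = (fa a + fa b \<le> int n + 2 \<and> \<not> (fa (a-3) + fa b \<le> int n - 1))"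
  unfolding Cn_def by (simp add: tr_mem AD_iff; arith)

definition Hn :: "nat \<Rightarrow> cell set" where "Hn n = {x \<in> Cn n. 0 \<le> snd x}"

lemma part_Hn: "part (Hn n)"
proof (cases "even n")
  case True
  then obtain m where m: "n = 2*m" by (auto elim: evenE)
  have e: "Hn n = TT12 (int n) \<union> UB (-int n - 3) m"
  proof (rule equalityI)
    show "Hn n \<subseteq> TT12 (int n) \<union> UB (-int n - 3) m"
      by (rule subset_pairI, simp add: Hn_def Cn_mem TT12_def UB_def m fa_def split: if_splits, presburger+)
    show "TT12 (int n) \<union> UB (-int n - 3) m \<subseteq> Hn n"
      by (rule subset_pairI, simp add: Hn_def Cn_mem TT12_def UB_def m fa_def split: if_splits, presburger+)
  qed
  have d: "TT12 (int n) \<inter> UB (-int n - 3) m = {}" by (auto simp: TT12_def UB_def m)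
  show ?thesis unfolding e by (rule part_union[OF part_TT12 part_UB d])
next
  case False
  then obtain m where m: "n = 2*m+1" using oddE by blast
  have e: "Hn n = TT (int n) \<union> UB (-int n - 3) (m+1)"
  proof (rule equalityI)
    show "Hn n \<subseteq> TT (int n) \<union> UB (-int n - 3) (m+1)"
      by (rule subset_pairI, simp add: Hn_def Cn_mem TT_def UB_def m fa_def split: if_splits, presburger+)
    show "TT (int n) \<union> UB (-int n - 3) (m+1) \<subseteq> Hn n"
      by (rule subset_pairI, simp add: Hn_def Cn_mem TT_def UB_def m fa_def split: if_splits, presburger+)
  qed
  have d: "TT (int n) \<inter> UB (-int n - 3) (m+1) = {}" by (auto simp: TT_def UB_def m)
  show ?thesis unfolding e by (rule part_union[OF part_TT part_UB d])
qed

lemma fa_sb: "fa (-1-b) = fa b" by (simp add: fa_def)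

lemma part_Cn: "part (Cn n)"
proof -
  have e: "Cn n = Hn n \<union> sb ` Hn n"
  proof (rule set_eqI)
    fix x show "(x \<in> Cn n) = (x \<in> Hn n \<union> sb ` Hn n)"
    proof (cases x)
      case (Pair a b)
      have "(x \<in> sb ` Hn n) = (sb x \<in> Hn n)" by (rule inv_image_iff) simp
      then show ?thesis using Pair by (auto simp: Hn_def Cn_mem fa_sb)
    qed
  qed
  have d: "Hn n \<inter> sb ` Hn n = {}" by (auto simp: Hn_def)
  show ?thesis unfolding e
    by (rule part_union[OF part_Hn part_image[OF inj_sb L_sb part_Hn] d])
qed

lemma tr_AD: "(p-3, q) \<in> aztec_diamond n \<Longrightarrow> (p,q) \<in> aztec_diamond (n+3)"
  by (simp add: AD_iff fa_def split: if_splits)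

lemma step:
  assumes IH: "part (aztec_diamond n - {(a-3,b)})"
    and c: "(a-3,b) \<in> aztec_diamond n"
  shows "part (aztec_diamond (n+3) - {(a,b)})"
proof -
  have e: "aztec_diamond (n+3) - {(a,b)} = tr 3 0 ` (aztec_diamond n - {(a-3,b)}) \<union> Cn n"
  proof (rule set_eqI)
    fix x show "(x \<in> aztec_diamond (n+3) - {(a,b)}) = (x \<in> tr 3 0 ` (aztec_diamond n - {(a-3,b)}) \<union> Cn n)"
    proof (cases x)
      case (Pair p q)
      have "(x \<in> Cn n) = ((p,q) \<in> aztec_diamond (n+3) \<and> (p-3,q) \<notin> aztec_diamond n)"
        using Pair by (simp add: Cn_def tr_mem)
      moreover have "(x \<in> tr 3 0 ` (aztec_diamond n - {(a-3,b)})) = ((p-3,q) \<in> aztec_diamond n \<and> (p,q) \<noteq> (a,b))"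
        using Pair by (auto simp: tr_mem)
      ultimately show ?thesis using Pair tr_AD[of p q n] c by auto
    qed
  qed
  have d: "tr 3 0 ` (aztec_diamond n - {(a-3,b)}) \<inter> Cn n = {}" by (auto simp: Cn_def)
  show ?thesis unfolding e by (rule part_union[OF part_image[OF inj_tr L_tr IH] part_Cn d])
qed

lemma AD1: "aztec_diamond 1 = block2 (-1) (-1)"
proof (rule set_eqI)
  fix x show "(x \<in> aztec_diamond 1) = (x \<in> block2 (-1) (-1))"
    by (cases x) (simp add: AD_iff fa_def block2_def split: if_splits, presburger)
qed

lemma base1: assumes "c \<in> aztec_diamond 1" shows "part (aztec_diamond 1 - {c})"
proof (rule part_tromino)
  show "is_L_tromino (aztec_diamond 1 - {c})"
    unfolding is_L_tromino_def AD1 using assms AD1 by blast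
qed

lemma main: "\<forall>c\<in>aztec_diamond (3*j+1). part (aztec_diamond (3*j+1) - {c})"
proof (induction j)
  case 0
  then show ?case using base1 by simp
next
  case (Suc j)
  have eq: "3 * Suc j + 1 = (3*j+1) + 3" by simp
  show ?case
  proof
    fix c assume c: "c \<in> aztec_diamond (3 * Suc j + 1)"
    show "part (aztec_diamond (3 * Suc j + 1) - {c})"
      unfolding eq
    proof (rule sym_reduce)
      show "c \<in> aztec_diamond (3 * j + 1 + 3)" using c eq by simp
    next
      fix a b assume ab: "(a,b) \<in> aztec_diamond (3 * j + 1 + 3)" "0 \<le> b" "b \<le> a"
      show "part (aztec_diamond (3 * j + 1 + 3) - {(a, b)})"
      proof (cases "j = 0")
        case False
        have in1: "(a-3,b) \<in> aztec_diamond (3*j+1)"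
          using ab False by (simp add: AD_iff fa_def split: if_splits)
        show ?thesis by (rule step[OF bspec[OF Suc.IH in1] in1])
      next
        case True
        have ab4: "fa a + fa b \<le> 3" using ab True by (simp add: AD_iff)
        have cases: "(a,b) = (0,0) \<or> (a,b) = (1,0) \<or> (a,b) = (1,1) \<or> (a,b) = (2,1) \<or> (a,b) = (2,0) \<or> (a,b) = (3,0)"
          using ab4 ab(2,3) by (simp add: fa_def split: if_splits) presburger
        have b4: "aztec_diamond (3 * j + 1 + 3) = aztec_diamond 4" using True by simp
        show ?thesis
        proof (cases "(a,b) = (2,0) \<or> (a,b) = (3,0)")
          case True
          have in1: "(a-3,b) \<in> aztec_diamond (3*j+1)"
            using True \<open>j = 0\<close> by (auto simp: AD_iff fa_def)
          show ?thesis by (rule step[OF bspec[OF Suc.IH in1] in1])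
        next
          case False
          then show ?thesis unfolding b4 using cases AD4_c1 AD4_c2 AD4_c3 AD4_c4 by auto
        qed
      qed
    qed
  qed
qed

theorem corollary4:
  fixes k :: nat and c :: cell
  assumes "k \<ge> 1"
    and "c \<in> aztec_diamond (3*k - 2)"
  shows "tromino_partitionable (aztec_diamond (3*k - 2) - {c})"
proof -
  obtain j where j: "k = Suc j" using assms(1) by (cases k) auto
  have e: "3*k - 2 = 3*j+1" using j by simp
  show ?thesis using main[of j] assms(2) unfolding e by blast
qed

end
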